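(* Let $n \ge 1$ and $N = 2^n$. Let $B_0(N) = \pi_N^{-1}\left(\left\{\begin{pmatrix} * & * \\ 0 & * \end{pmatrix}\right\}\right) \subseteq \mathrm{GL}_2(\hat{\mathbb{Z}})$ be the Borel subgroup of level $N$ and $C_{ns}(N)$ the nonsplit Cartan subgroup of level $N$. Then $B_0(N)$ and $C_{ns}(N)$ are independent in $\mathrm{GL}_2(\hat{\mathbb{Z}})$, i.e. $[\mathrm{GL}_2(\hat{\mathbb{Z}}):B_0(N)\cap C_{ns}(N)] = [\mathrm{GL}_2(\hat{\mathbb{Z}}):B_0(N)]\,[\mathrm{GL}_2(\hat{\mathbb{Z}}):C_{ns}(N)]$; but for $n>1$ they are not geometrically independent, i.e. for $n > 1$, $[\mathrm{SL}_2(\hat{\mathbb{Z}}):B_0(N)\cap C_{ns}(N)\cap\mathrm{SL}_2(\hat{\mathbb{Z}})] \neq [\mathrm{SL}_2(\hat{\mathbb{Z}}):B_0(N)\cap\mathrm{SL}_2(\hat{\mathbb{Z}})]\,[\mathrm{SL}_2(\hat{\mathbb{Z}}):C_{ns}(N)\cap\mathrm{SL}_2(\hat{\mathbb{Z}})]$.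
   Context: $\hat{\mathbb{Z}} = \varprojlim_N \mathbb{Z}/N\mathbb{Z}$ and $\pi_N:\mathrm{GL}_2(\hat{\mathbb{Z}})\to \mathrm{GL}_2(\mathbb{Z}/N\mathbb{Z})$ is reduction. Nonsplit Cartan subgroup: let $R$ be an imaginary quadratic order in which every prime dividing $N$ (here, $2$) is inert, with an optimal embedding $\iota: R \to M_2(\mathbb{Z})$ and its reduction $\iota_N: R \to M_2(\mathbb{Z}/N\mathbb{Z})$; then $C_{ns}(N) = \pi_N^{-1}(\iota_N(R)^* )$, which is well defined up to conjugation in $\mathrm{GL}_2(\hat{\mathbb{Z}})$. *)

theory Defs
  imports "HOL-Analysis.Analysis" "HOL-Algebra.Coset" "HOL-Number_Theory.Cong"
begin

text \<open>Integer 2x2 matrices; reduction of entries modulo N (representatives in 0..N-1),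
  so that M2(Z/NZ) is modelled by matrices with entries in {0..<N}.\<close>

definition red :: "nat \<Rightarrow> int^2^2 \<Rightarrow> int^2^2" where
  "red N A = (\<chi> i j. A $ i $ j mod int N)"

text \<open>M2(Zhat) = inverse limit of the M2(Z/NZ): compatible families (g N)_{N>0},
  normalised by g 0 = 0.\<close>

definition Mhat :: "(nat \<Rightarrow> int^2^2) set" where
  "Mhat = {g. g 0 = 0 \<and> (\<forall>N M. 0 < N \<and> 0 < M \<and> N dvd M \<longrightarrow> red N (g M) = g N)}"

definition hmul :: "(nat \<Rightarrow> int^2^2) \<Rightarrow> (nat \<Rightarrow> int^2^2) \<Rightarrow> (nat \<Rightarrow> int^2^2)" where
  "hmul g h = (\<lambda>N. if N = 0 then 0 else red N (g N ** h N))"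

definition hone :: "nat \<Rightarrow> int^2^2" where
  "hone = (\<lambda>N. if N = 0 then 0 else red N (mat 1))"

text \<open>GL2(Zhat): determinant is a unit in Zhat, i.e. a unit modulo every N.\<close>

definition GL2hat_set :: "(nat \<Rightarrow> int^2^2) set" where
  "GL2hat_set = {g \<in> Mhat. \<forall>N>0. coprime (det (g N)) (int N)}"

definition SL2hat_set :: "(nat \<Rightarrow> int^2^2) set" where
  "SL2hat_set = {g \<in> GL2hat_set. \<forall>N>0. [det (g N) = 1] (mod int N)}"

definition GL2hat :: "(nat \<Rightarrow> int^2^2) monoid" where
  "GL2hat = \<lparr>carrier = GL2hat_set, mult = hmul, one = hone\<rparr>"

definition SL2hat :: "(nat \<Rightarrow> int^2^2) monoid" where
  "SL2hat = \<lparr>carrier = SL2hat_set, mult = hmul, one = hone\<rparr>"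

definition subgroup_index :: "('a, 'b) monoid_scheme \<Rightarrow> 'a set \<Rightarrow> nat" where
  "subgroup_index G H = card (rcosets\<^bsub>G\<^esub> H)"

definition B0 :: "nat \<Rightarrow> (nat \<Rightarrow> int^2^2) set" where
  "B0 N = {g \<in> GL2hat_set. g N $ 2 $ 1 = 0}"

text \<open>An imaginary quadratic order R with an optimal embedding iota : R \<rightarrow> M2(Z) is
  recorded by T = iota(tau) where R = Z[tau]; then iota(R) = Z[T] = {a I + b T}.
  Imaginary quadratic: the characteristic polynomial of T has negative discriminant.
  Optimal: iota(K) \<inter> M2(Z) = iota(R), i.e. (a I + b T)/m integral implies m | a, m | b.\<close>

definition imag_quad_optimal :: "int^2^2 \<Rightarrow> bool" where
  "imag_quad_optimal T \<longleftrightarrow>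
     (T$1$1 + T$2$2)^2 - 4 * det T < 0 \<and>
     (\<forall>a b m::int. m > 0 \<and> (\<forall>i j. m dvd (mat a + mat b ** T) $ i $ j) \<longrightarrow> m dvd a \<and> m dvd b)"

text \<open>p is inert in R = Z[T]: R/pR is a field, i.e. every nonzero element a + b tau
  (a, b not both divisible by p) is a unit mod p.\<close>

definition inert_at :: "int \<Rightarrow> int^2^2 \<Rightarrow> bool" where
  "inert_at p T \<longleftrightarrow>
     (\<forall>a b::int. \<not> (p dvd a \<and> p dvd b) \<longrightarrow> coprime (det (mat a + mat b ** T)) p)"

text \<open>Nonsplit Cartan of level N: preimage under reduction mod N of iota_N(R)^*.\<close>

definition Cns :: "nat \<Rightarrow> int^2^2 \<Rightarrow> (nat \<Rightarrow> int^2^2) set" where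
  "Cns N T = {g \<in> GL2hat_set. \<exists>a b::int.
      coprime (det (mat a + mat b ** T)) (int N) \<and> g N = red N (mat a + mat b ** T)}"

end

theory Submission
  imports Defs "HOL-Number_Theory.Number_Theory" "HOL-Computational_Algebra.Primes"
begin


type_synonym m2 = "int^2^2"

lemma mm: "((A::m2) ** B)$i$j = A$i$1*B$1$j + A$i$2*B$2$j"
  by (simp add: matrix_matrix_mult_def sum_2)

lemma red_entry[simp]: "red N A $ i $ j = A $ i $ j mod int N"
  by (simp add: red_def)

lemma mat_entry: "(mat a :: m2) $ i $ j = (if i = j then a else 0)"
  by (simp add: mat_def)

lemma m2_eq_iff: "(A::m2) = B \<longleftrightarrow> A$1$1 = B$1$1 \<and> A$1$2 = B$1$2 \<and> A$2$1 = B$2$1 \<and> A$2$2 = B$2$2"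
  by (auto simp: vec_eq_iff forall_2)

definition mcong :: "nat \<Rightarrow> m2 \<Rightarrow> m2 \<Rightarrow> bool" where
  "mcong N A B \<longleftrightarrow> [A$1$1 = B$1$1] (mod int N) \<and> [A$1$2 = B$1$2] (mod int N)
      \<and> [A$2$1 = B$2$1] (mod int N) \<and> [A$2$2 = B$2$2] (mod int N)"

lemma red_eq_iff: "red N A = red N B \<longleftrightarrow> mcong N A B"
  by (simp add: m2_eq_iff mcong_def cong_def)

lemma mcong_red: "mcong N (red N A) A"
  by (simp add: mcong_def cong_def)

lemma mcong_refl[simp]: "mcong N A A" by (simp add: mcong_def)
lemma mcong_sym: "mcong N A B \<Longrightarrow> mcong N B A" by (simp add: mcong_def cong_sym_eq)
lemma mcong_trans: "mcong N A B \<Longrightarrow> mcong N B C \<Longrightarrow> mcong N A C"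
  unfolding mcong_def by (meson cong_trans)

lemma mcong_mult: "mcong N A A' \<Longrightarrow> mcong N B B' \<Longrightarrow> mcong N (A ** B) (A' ** B')"
  unfolding mcong_def mm by (intro conjI cong_add cong_mult; simp)

lemma mcong_add: "mcong N A A' \<Longrightarrow> mcong N B B' \<Longrightarrow> mcong N (A + B) (A' + B')"
  unfolding mcong_def by (simp add: cong_add)

lemma mcong_det: "mcong N A B \<Longrightarrow> [det A = det B] (mod int N)"
  unfolding mcong_def det_2 by (intro cong_diff cong_mult; simp)

lemma mcong_dvd: "mcong N A B \<Longrightarrow> M dvd N \<Longrightarrow> mcong M A B"
  unfolding mcong_def by (meson cong_dvd_modulus int_dvd_int_iff)

lemma det_red: "[det (red N A) = det A] (mod int N)"
  by (rule mcong_det[OF mcong_red])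

lemma red_red: "red N (red N A) = red N A"
  by (simp add: red_def vec_eq_iff)

lemma red_mult_l: "red N (red N A ** B) = red N (A ** B)"
  by (simp add: red_eq_iff mcong_mult mcong_red)
lemma red_mult_r: "red N (A ** red N B) = red N (A ** B)"
  by (simp add: red_eq_iff mcong_mult mcong_red)

lemma det_mult2: "det ((A::m2) ** B) = det A * det B"
  by (rule det_mul)


lemma red_red_dvd: "N dvd M \<Longrightarrow> red N (red M A) = red N A"
  by (simp add: red_def vec_eq_iff mod_mod_cancel)

lemma mhat_red: "g \<in> Mhat \<Longrightarrow> 0 < N \<Longrightarrow> red N (g N) = g N"
  unfolding Mhat_def by auto

lemma mhat_compat: "g \<in> Mhat \<Longrightarrow> 0 < N \<Longrightarrow> 0 < M \<Longrightarrow> N dvd M \<Longrightarrow> mcong N (g M) (g N)"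
  unfolding Mhat_def by (metis (mono_tags, lifting) mem_Collect_eq red_eq_iff red_red)

lemma MhatI: "g 0 = 0 \<Longrightarrow> (\<And>N M. 0 < N \<Longrightarrow> 0 < M \<Longrightarrow> N dvd M \<Longrightarrow> red N (g M) = g N) \<Longrightarrow> g \<in> Mhat"
  unfolding Mhat_def by auto

lemma hmul_pos: "0 < N \<Longrightarrow> hmul g h N = red N (g N ** h N)"
  by (simp add: hmul_def)

lemma hone_pos: "0 < N \<Longrightarrow> hone N = red N (mat 1)"
  by (simp add: hone_def)

lemma hmul_Mhat: "g \<in> Mhat \<Longrightarrow> h \<in> Mhat \<Longrightarrow> hmul g h \<in> Mhat"
proof (rule MhatI)
  fix N M :: nat assume g: "g \<in> Mhat" and h: "h \<in> Mhat" and NM: "0 < N" "0 < M" "N dvd M"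
  have "red N (hmul g h M) = red N (g M ** h M)" using NM by (simp add: hmul_pos red_red_dvd)
  also have "\<dots> = red N (g N ** h N)" unfolding red_eq_iff
    by (intro mcong_mult mhat_compat g h NM)
  finally show "red N (hmul g h M) = hmul g h N" using NM by (simp add: hmul_pos)
qed (simp add: hmul_def)

lemma det_hmul: "0 < N \<Longrightarrow> [det (hmul g h N) = det (g N) * det (h N)] (mod int N)"
  by (simp add: hmul_pos det_red det_mult2[symmetric])

lemma hone_Mhat: "hone \<in> Mhat"
  by (rule MhatI) (auto simp: hone_def red_red_dvd)

lemma det_mat1: "det (mat 1 :: m2) = 1" by simp

lemma det_hone: "0 < N \<Longrightarrow> [det (hone N) = 1] (mod int N)"
  using det_red[of N "mat 1"] by (simp add: hone_pos)

lemma coprime_one_cong: "[a = 1] (mod m) \<Longrightarrow> coprime (a::int) m"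
  using cong_imp_coprime cong_sym by (metis coprime_1_left)

definition uinv :: "int \<Rightarrow> nat \<Rightarrow> int" where
  "uinv d N = (SOME x. [d * x = 1] (mod int N))"

lemma uinv: "coprime d (int N) \<Longrightarrow> [d * uinv d N = 1] (mod int N)"
  unfolding uinv_def by (rule someI_ex) (rule cong_solve_coprime_int)

definition adj :: "m2 \<Rightarrow> m2" where
  "adj A = (\<chi> i j. if i = 1 then (if j = 1 then A$2$2 else - A$1$2)
                    else (if j = 1 then - A$2$1 else A$1$1))"

lemma adj_entries[simp]: "adj A $1$1 = A$2$2" "adj A $1$2 = - A$1$2"
   "adj A $2$1 = - A$2$1" "adj A $2$2 = A$1$1"
  by (simp_all add: adj_def)

lemma mat_entries[simp]: "(mat a :: m2)$1$1 = a" "(mat a :: m2)$1$2 = 0"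
   "(mat a :: m2)$2$1 = 0" "(mat a :: m2)$2$2 = a"
  by (simp_all add: mat_def)

lemma adj_mult: "adj A ** A = mat (det A)"
  by (simp add: m2_eq_iff mm det_2 algebra_simps)

lemma mcong_adj: "mcong N A B \<Longrightarrow> mcong N (adj A) (adj B)"
  unfolding mcong_def by (simp add: cong_minus_minus_iff)

lemma mcong_mat: "[a = b] (mod int N) \<Longrightarrow> mcong N (mat a) (mat b)"
  unfolding mcong_def by simp

lemma mat_mult_mat: "(mat a :: m2) ** mat b = mat (a * b)"
  by (simp add: m2_eq_iff mm)

lemma mat_mult_assoc: "(A::m2) ** B ** C = A ** (B ** C)"
  by (rule matrix_mul_assoc[symmetric])

definition ginv :: "(nat \<Rightarrow> m2) \<Rightarrow> nat \<Rightarrow> m2" where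
  "ginv g = (\<lambda>N. if N = 0 then 0 else red N (mat (uinv (det (g N)) N) ** adj (g N)))"

lemma ginv_left: assumes "g \<in> GL2hat_set" "0 < N"
  shows "hmul (ginv g) g N = hone N"
proof -
  have cp: "coprime (det (g N)) (int N)" using assms unfolding GL2hat_set_def by auto
  have "hmul (ginv g) g N = red N (mat (uinv (det (g N)) N) ** adj (g N) ** g N)"
    using assms by (simp add: hmul_pos ginv_def red_mult_l)
  also have "\<dots> = red N (mat (uinv (det (g N)) N * det (g N)))"
    by (simp add: mat_mult_assoc adj_mult mat_mult_mat)
  also have "\<dots> = red N (mat 1)"
    unfolding red_eq_iff using uinv[OF cp] by (intro mcong_mat) (simp add: mult.commute)
  finally show ?thesis using assms by (simp add: hone_pos)
qed

lemma ginv_Mhat: assumes g: "g \<in> GL2hat_set" shows "ginv g \<in> Mhat"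
proof (rule MhatI)
  fix N M :: nat assume NM: "0 < N" "0 < M" "N dvd M"
  have gm: "g \<in> Mhat" using g unfolding GL2hat_set_def by auto
  have cpN: "coprime (det (g N)) (int N)" using g NM unfolding GL2hat_set_def by auto
  have cpM: "coprime (det (g M)) (int M)" using g NM unfolding GL2hat_set_def by auto
  have c: "mcong N (g M) (g N)" by (rule mhat_compat[OF gm NM])
  have d: "[det (g M) = det (g N)] (mod int N)" by (rule mcong_det[OF c])
  have uM: "[det (g M) * uinv (det (g M)) M = 1] (mod int N)"
    using uinv[OF cpM] NM by (meson cong_dvd_modulus int_dvd_int_iff)
  have uM': "[det (g N) * uinv (det (g M)) M = 1] (mod int N)"
    by (meson cong_mult cong_refl cong_sym cong_trans d uM)
  have uN: "[det (g N) * uinv (det (g N)) N = 1] (mod int N)" by (rule uinv[OF cpN])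
  have u: "[uinv (det (g M)) M = uinv (det (g N)) N] (mod int N)"
    using uM' uN cpN by (metis cong_mult_lcancel cong_sym cong_trans)
  have "red N (ginv g M) = red N (mat (uinv (det (g M)) M) ** adj (g M))"
    using NM by (simp add: ginv_def red_red_dvd)
  also have "\<dots> = red N (mat (uinv (det (g N)) N) ** adj (g N))"
    unfolding red_eq_iff by (intro mcong_mult mcong_mat u mcong_adj c)
  finally show "red N (ginv g M) = ginv g N" using NM by (simp add: ginv_def)
qed (simp add: ginv_def)

lemma ginv_det: assumes g: "g \<in> GL2hat_set" "0 < N"
  shows "[det (ginv g N) * det (g N) = 1] (mod int N)"
proof -
  have "[det (ginv g N) * det (g N) = det (hmul (ginv g) g N)] (mod int N)"
    using det_hmul[OF g(2)] by (simp add: cong_sym)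
  also have "[det (hmul (ginv g) g N) = 1] (mod int N)"
    using ginv_left[OF g] det_hone[OF g(2)] by simp
  finally show ?thesis .
qed

lemma ginv_GL: assumes g: "g \<in> GL2hat_set" shows "ginv g \<in> GL2hat_set"
  unfolding GL2hat_set_def using ginv_Mhat[OF g] ginv_det[OF g]
  by (auto simp: coprime_iff_invertible_int)

lemma hmul_GL: assumes "g \<in> GL2hat_set" "h \<in> GL2hat_set" shows "hmul g h \<in> GL2hat_set"
proof -
  have "coprime (det (hmul g h N)) (int N)" if "0 < N" for N
  proof -
    have "coprime (det (g N) * det (h N)) (int N)" using assms that unfolding GL2hat_set_def by auto
    then show ?thesis using det_hmul[OF that, of g h] cong_imp_coprime cong_sym by blast
  qed
  then show ?thesis using assms hmul_Mhat unfolding GL2hat_set_def by auto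
qed

lemma hone_GL: "hone \<in> GL2hat_set"
  unfolding GL2hat_set_def using hone_Mhat det_hone coprime_one_cong by auto

lemma hmul_assoc: "hmul (hmul g h) k = hmul g (hmul h k)"
  by (rule ext) (simp add: hmul_def red_mult_l red_mult_r mat_mult_assoc)

lemma hone_mul: "g \<in> Mhat \<Longrightarrow> hmul hone g = g"
  by (rule ext) (auto simp: hmul_def hone_def red_mult_l mhat_red Mhat_def)

lemma hmul_ginv: "g \<in> GL2hat_set \<Longrightarrow> hmul (ginv g) g = hone"
proof (rule ext)
  fix N assume g: "g \<in> GL2hat_set"
  show "hmul (ginv g) g N = hone N"
    using g ginv_left[OF g, of N] by (cases "N = 0") (auto simp: hmul_def hone_def)
qed

lemma group_GL: "group GL2hat"
proof (rule groupI)
  fix x assume "x \<in> carrier GL2hat"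
  then show "\<exists>y\<in>carrier GL2hat. y \<otimes>\<^bsub>GL2hat\<^esub> x = \<one>\<^bsub>GL2hat\<^esub>"
    by (intro bexI[of _ "ginv x"]) (auto simp: GL2hat_def hmul_ginv ginv_GL)
qed (auto simp: GL2hat_def hmul_GL hone_GL hmul_assoc hone_mul simp del: GL2hat_set_def
    dest: GL2hat_set_def[THEN eqset_imp_iff, THEN iffD1])


lemma GL_carrier[simp]: "carrier GL2hat = GL2hat_set" "mult GL2hat = hmul" "one GL2hat = hone"
  by (simp_all add: GL2hat_def)
lemma SL_carrier[simp]: "carrier SL2hat = SL2hat_set" "mult SL2hat = hmul" "one SL2hat = hone"
  by (simp_all add: SL2hat_def)

lemma inv_GL: "x \<in> GL2hat_set \<Longrightarrow> inv\<^bsub>GL2hat\<^esub> x = ginv x"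
  using group.inv_equality[OF group_GL, of "ginv x" x] by (simp add: hmul_ginv ginv_GL)

lemma SL_sub_GL: "SL2hat_set \<subseteq> GL2hat_set" unfolding SL2hat_set_def by auto

lemma ginv_SL: assumes "g \<in> SL2hat_set" shows "ginv g \<in> SL2hat_set"
proof -
  have g: "g \<in> GL2hat_set" using assms SL_sub_GL by auto
  have "[det (ginv g N) = 1] (mod int N)" if "0 < N" for N
  proof -
    have "[det (ginv g N) * det (g N) = 1] (mod int N)" by (rule ginv_det[OF g that])
    moreover have "[det (g N) = 1] (mod int N)" using assms that unfolding SL2hat_set_def by auto
    ultimately show ?thesis by (metis cong_mult_rcancel cong_scalar_left cong_sym cong_trans mult.right_neutral coprime_one_cong cong_refl)
  qed
  then show ?thesis using ginv_GL[OF g] unfolding SL2hat_set_def by auto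
qed

lemma hmul_SL: assumes "g \<in> SL2hat_set" "h \<in> SL2hat_set" shows "hmul g h \<in> SL2hat_set"
proof -
  have "[det (hmul g h N) = 1] (mod int N)" if "0 < N" for N
  proof -
    have "[det (g N) * det (h N) = 1 * 1] (mod int N)" using assms that unfolding SL2hat_set_def
      by (intro cong_mult) auto
    then show ?thesis using det_hmul[OF that, of g h] cong_trans by auto
  qed
  then show ?thesis using assms SL_sub_GL hmul_GL unfolding SL2hat_set_def by auto
qed

lemma hone_SL: "hone \<in> SL2hat_set"
  unfolding SL2hat_set_def using hone_GL det_hone by auto

lemma SL_subgroup: "subgroup SL2hat_set GL2hat"
  apply (rule group.subgroupI[OF group_GL])
  prefer 2 using hone_SL apply blast
  apply (auto simp: inv_GL hone_SL SL_sub_GL[THEN subsetD] ginv_SL hmul_SL dest: SL_sub_GL[THEN subsetD])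
  done

lemma SL_eq: "SL2hat = GL2hat\<lparr>carrier := SL2hat_set\<rparr>"
  by (simp add: SL2hat_def GL2hat_def)

lemma group_SL: "group SL2hat"
  unfolding SL_eq by (rule group.subgroup_imp_group[OF group_GL SL_subgroup])

lemma inv_SL: "x \<in> SL2hat_set \<Longrightarrow> inv\<^bsub>SL2hat\<^esub> x = ginv x"
  using group.inv_equality[OF group_SL, of "ginv x" x] SL_sub_GL
  by (auto simp: hmul_ginv ginv_SL)

lemma sub_pred:
  assumes grp: "group G" "mult G = hmul" "carrier G \<subseteq> GL2hat_set" "one G = hone"
    and inv: "\<And>x. x \<in> carrier G \<Longrightarrow> inv\<^bsub>G\<^esub> x = ginv x \<and> ginv x \<in> carrier G"
    and N: "0 < N" and P1: "P (red N (mat 1))"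
    and P2: "\<And>A B. P (red N A) \<Longrightarrow> P (red N B) \<Longrightarrow> P (red N (A ** B))"
    and P3: "\<And>g. g \<in> GL2hat_set \<Longrightarrow> P (g N) \<Longrightarrow> P (ginv g N)"
  shows "subgroup {g \<in> carrier G. P (g N)} G"
proof (rule group.subgroupI[OF grp(1)])
  have "one G \<in> carrier G" by (simp add: grp(1) group.is_monoid monoid.one_closed)
  then show "{g \<in> carrier G. P (g N)} \<noteq> {}" using P1 grp(4) N by (auto simp: hone_pos)
next
  fix a b assume a: "a \<in> {g \<in> carrier G. P (g N)}" and b: "b \<in> {g \<in> carrier G. P (g N)}"
  have am: "a \<in> Mhat" "b \<in> Mhat" using a b grp(3) unfolding GL2hat_set_def by auto
  have "P (red N (a N ** b N))" using P2[of "a N" "b N"] a b mhat_red[OF am(1) N] mhat_red[OF am(2) N] by simp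
  then show "a \<otimes>\<^bsub>G\<^esub> b \<in> {g \<in> carrier G. P (g N)}"
  proof -
    have "a \<otimes>\<^bsub>G\<^esub> b \<in> carrier G" using a b grp(1) by (simp add: group.is_monoid monoid.m_closed)
    then show ?thesis using \<open>P (red N (a N ** b N))\<close> grp(2) N by (simp add: hmul_pos)
  qed
next
  fix a assume a: "a \<in> {g \<in> carrier G. P (g N)}"
  then show "inv\<^bsub>G\<^esub> a \<in> {g \<in> carrier G. P (g N)}" using inv P3 grp(3) by auto
qed auto

lemma B0_sub: assumes "0 < N" "group G" "mult G = hmul" "carrier G \<subseteq> GL2hat_set" "one G = hone"
    "\<And>x. x \<in> carrier G \<Longrightarrow> inv\<^bsub>G\<^esub> x = ginv x \<and> ginv x \<in> carrier G"
  shows "subgroup {g \<in> carrier G. g N $ 2 $ 1 = 0} G"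
proof (rule sub_pred[OF assms(2-6) assms(1)])
  fix A B :: m2 assume "red N A $ 2 $ 1 = 0" "red N B $ 2 $ 1 = 0"
  then have "[A $ 2 $ 1 = 0] (mod int N)" by (simp add: cong_def)
  then have "[(A ** B) $ 2 $ 1 = 0 * B$1$1 + A$2$2 * 0] (mod int N)"
    using \<open>red N B $ 2 $ 1 = 0\<close> unfolding mm by (intro cong_add cong_mult) (auto simp: cong_def)
  then show "red N (A ** B) $ 2 $ 1 = 0" by (simp add: cong_def)
next
  fix g :: "nat \<Rightarrow> m2" assume "g N $ 2 $ 1 = 0"
  then show "ginv g N $ 2 $ 1 = 0" using assms(1) by (simp add: ginv_def mm)
next show "red N (mat 1) $ 2 $ 1 = 0" by simp
qed

lemma cns_mult: "(mat a + mat b ** T) ** (mat c + mat d ** T)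
   = mat (a*c - b*d*det T) + mat (a*d + b*c + b*d*(T$1$1+T$2$2)) ** (T::m2)"
  by (simp add: m2_eq_iff mm det_2 algebra_simps)

lemma cns_adj: "adj (mat a + mat b ** T) = mat (a + b*(T$1$1+T$2$2)) + mat (-b) ** (T::m2)"
  by (simp add: m2_eq_iff mm algebra_simps)

lemma mat_mult_cns: "mat u ** (mat a + mat b ** T) = mat (u*a) + mat (u*b) ** (T::m2)"
  by (simp add: m2_eq_iff mm algebra_simps)

lemma det_adj: "det (adj A) = det A" by (simp add: det_2 algebra_simps)

lemma Cns_sub: assumes "0 < N" "group G" "mult G = hmul" "carrier G \<subseteq> GL2hat_set" "one G = hone"
    "\<And>x. x \<in> carrier G \<Longrightarrow> inv\<^bsub>G\<^esub> x = ginv x \<and> ginv x \<in> carrier G"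
  shows "subgroup {g \<in> carrier G. \<exists>a b::int.
      coprime (det (mat a + mat b ** T)) (int N) \<and> g N = red N (mat a + mat b ** T)} G"
proof (rule sub_pred[OF assms(2-6) assms(1)])
  show "\<exists>a b. coprime (det (mat a + mat b ** T)) (int N) \<and> red N (mat 1) = red N (mat a + mat b ** T)"
    by (rule exI[of _ 1], rule exI[of _ 0]) simp
next
  fix A B :: m2
  assume "\<exists>a b. coprime (det (mat a + mat b ** T)) (int N) \<and> red N A = red N (mat a + mat b ** T)"
     "\<exists>a b. coprime (det (mat a + mat b ** T)) (int N) \<and> red N B = red N (mat a + mat b ** T)"
  then obtain a b c d where ab: "coprime (det (mat a + mat b ** T)) (int N)" "red N A = red N (mat a + mat b ** T)"
    and cd: "coprime (det (mat c + mat d ** T)) (int N)" "red N B = red N (mat c + mat d ** T)" by blast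
  have "red N (A ** B) = red N ((mat a + mat b ** T) ** (mat c + mat d ** T))"
    by (metis ab(2) cd(2) red_mult_l red_mult_r)
  moreover have "coprime (det ((mat a + mat b ** T) ** (mat c + mat d ** T))) (int N)"
    using ab cd by (simp add: det_mult2)
  ultimately show "\<exists>a b. coprime (det (mat a + mat b ** T)) (int N) \<and> red N (A ** B) = red N (mat a + mat b ** T)"
    unfolding cns_mult by blast
next
  fix g :: "nat \<Rightarrow> m2"
  assume g: "g \<in> GL2hat_set" and "\<exists>a b. coprime (det (mat a + mat b ** T)) (int N) \<and> g N = red N (mat a + mat b ** T)"
  then obtain a b where ab: "coprime (det (mat a + mat b ** T)) (int N)" "g N = red N (mat a + mat b ** T)" by blast
  define u where "u = uinv (det (g N)) N"
  have cp: "coprime (det (g N)) (int N)" using g assms(1) unfolding GL2hat_set_def by auto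
  have cu: "coprime u (int N)" using uinv[OF cp] unfolding u_def
    by (metis coprime_iff_invertible_int mult.commute)
  have "ginv g N = red N (mat u ** adj (g N))" using assms(1) by (simp add: ginv_def u_def)
  also have "\<dots> = red N (mat u ** adj (mat a + mat b ** T))"
    unfolding red_eq_iff ab(2) by (intro mcong_mult mcong_refl mcong_adj mcong_red)
  finally have e: "ginv g N = red N (mat (u * (a + b * (T$1$1+T$2$2))) + mat (u * - b) ** T)"
    unfolding cns_adj mat_mult_cns .
  have "det (mat (u * (a + b * (T$1$1+T$2$2))) + mat (u * - b) ** T) = det (mat u ** adj (mat a + mat b ** T))"
    unfolding cns_adj mat_mult_cns ..
  also have "\<dots> = det (mat u :: m2) * det (mat a + mat b ** T)" by (simp only: det_mult2 det_adj)
  also have "\<dots> = u * u * det (mat a + mat b ** T)" by (simp add: det_2)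
  finally have "coprime (det (mat (u * (a + b * (T$1$1+T$2$2))) + mat (u * - b) ** T)) (int N)"
    using cu ab(1) by simp
  then show "\<exists>a b. coprime (det (mat a + mat b ** T)) (int N) \<and> ginv g N = red N (mat a + mat b ** T)"
    using e by blast
qed





lemma (in group) set_mult_sub:
  assumes "subgroup B G" "K \<subseteq> B" "\<one> \<in> K" shows "B <#> K = B"
proof
  show "B <#> K \<subseteq> B" using assms unfolding set_mult_def by (auto intro: subgroup.m_closed)
  show "B \<subseteq> B <#> K" unfolding set_mult_def
  proof
    fix h assume "h \<in> B"
    then have "h = h \<otimes> \<one>" using assms(1) subgroup.mem_carrier by fastforce
    then show "h \<in> (\<Union>h\<in>B. \<Union>k\<in>K. {h \<otimes> k})" using \<open>h \<in> B\<close> assms(3) by blast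
  qed
qed

lemma (in group) coset_F:
  assumes "subgroup B G" "subgroup C G" "x \<in> carrier G"
  shows "B <#> ((B \<inter> C) #> x) = B #> x"
proof -
  have "B <#> ((B \<inter> C) #> x) = (B <#> (B \<inter> C)) #> x"
    using assms by (intro setmult_rcos_assoc) (auto dest: subgroup.subset)
  also have "B <#> (B \<inter> C) = B"
    using assms by (intro set_mult_sub) (auto intro: subgroup.one_closed)
  finally show ?thesis .
qed

lemma (in group) coset_inter_eq:
  assumes B: "subgroup B G" and C: "subgroup C G" and xy: "x \<in> carrier G" "y \<in> carrier G"
    and eq: "B #> x = B #> y" "C #> x = C #> y"
  shows "(B \<inter> C) #> x = (B \<inter> C) #> y"
proof -
  have "x \<in> B #> y" "x \<in> C #> y" using eq rcos_self[OF xy(1)] B C by auto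
  then have "x \<otimes> inv y \<in> B" "x \<otimes> inv y \<in> C"
    using subgroup.rcos_module_imp[OF B is_group xy(2)] subgroup.rcos_module_imp[OF C is_group xy(2)] by auto
  then have "x \<in> (B \<inter> C) #> y"
    using subgroup.rcos_module_rev[OF subgroups_Inter_pair[OF B C] is_group xy(2) xy(1)] by auto
  then show ?thesis using repr_independence[OF _ xy(2) subgroups_Inter_pair[OF B C]] by auto
qed

lemma (in group) card_inter_image:
  assumes B: "subgroup B G" and C: "subgroup C G"
  shows "card (rcosets (B \<inter> C)) = card ((\<lambda>x. (B #> x, C #> x)) ` carrier G)"
proof -
  define F where "F R = (B <#> R, C <#> R)" for R
  have rc: "rcosets (B \<inter> C) = (\<lambda>x. (B \<inter> C) #> x) ` carrier G"
    unfolding RCOSETS_def by blast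
  have Fx: "F ((B \<inter> C) #> x) = (B #> x, C #> x)" if "x \<in> carrier G" for x
  proof -
    have "C <#> ((B \<inter> C) #> x) = C #> x" using coset_F[OF C B that] by (simp only: Int_commute)
    then show ?thesis using coset_F[OF B C that] unfolding F_def by simp
  qed
  have "inj_on F (rcosets (B \<inter> C))"
  proof (rule inj_onI)
    fix R1 R2 assume R: "R1 \<in> rcosets (B \<inter> C)" "R2 \<in> rcosets (B \<inter> C)" and FR: "F R1 = F R2"
    from R obtain x where x: "x \<in> carrier G" "R1 = (B \<inter> C) #> x" unfolding rc by blast
    from R obtain y where y: "y \<in> carrier G" "R2 = (B \<inter> C) #> y" unfolding rc by blast
    have "(B #> x, C #> x) = (B #> y, C #> y)" using FR Fx[OF x(1)] Fx[OF y(1)] x(2) y(2) by simp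
    then show "R1 = R2" using coset_inter_eq[OF B C x(1) y(1)] x(2) y(2) by simp
  qed
  then have "card (rcosets (B \<inter> C)) = card (F ` (rcosets (B \<inter> C)))" by (simp add: card_image)
  also have "F ` (rcosets (B \<inter> C)) = (\<lambda>x. (B #> x, C #> x)) ` carrier G"
    unfolding rc image_image using Fx by (intro image_cong) auto
  finally show ?thesis .
qed

lemma (in group) image_sub:
  assumes "subgroup B G" "subgroup C G"
  shows "(\<lambda>x. (B #> x, C #> x)) ` carrier G \<subseteq> (rcosets B) \<times> (rcosets C)"
  using subgroup.subset[OF assms(1)] subgroup.subset[OF assms(2)] by (auto intro: rcosetsI)

lemma (in group) independent:
  assumes B: "subgroup B G" and C: "subgroup C G"
    and surj: "\<And>x y. x \<in> carrier G \<Longrightarrow> y \<in> carrier G \<Longrightarrow>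
          \<exists>z \<in> carrier G. B #> z = B #> x \<and> C #> z = C #> y"
  shows "card (rcosets (B \<inter> C)) = card (rcosets B) * card (rcosets C)"
proof -
  have "(\<lambda>x. (B #> x, C #> x)) ` carrier G = (rcosets B) \<times> (rcosets C)"
  proof
    show "(rcosets B) \<times> (rcosets C) \<subseteq> (\<lambda>x. (B #> x, C #> x)) ` carrier G"
    proof
      fix p assume "p \<in> (rcosets B) \<times> (rcosets C)"
      then obtain x y where "x \<in> carrier G" "y \<in> carrier G" "p = (B #> x, C #> y)"
        unfolding RCOSETS_def by auto
      moreover obtain z where "z \<in> carrier G" "B #> z = B #> x" "C #> z = C #> y"
        using surj[OF \<open>x \<in> carrier G\<close> \<open>y \<in> carrier G\<close>] by blast
      ultimately show "p \<in> (\<lambda>x. (B #> x, C #> x)) ` carrier G"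
        by (intro image_eqI[of _ _ z]) auto
    qed
  qed (rule image_sub[OF B C])
  then have "card ((\<lambda>x. (B #> x, C #> x)) ` carrier G) = card ((rcosets B) \<times> (rcosets C))"
    by (simp only:)
  then show ?thesis unfolding card_inter_image[OF B C] card_cartesian_product .
qed

lemma (in group) not_independent:
  assumes B: "subgroup B G" and C: "subgroup C G"
    and fin: "finite (rcosets B)" "finite (rcosets C)"
    and ns: "x \<in> carrier G" "y \<in> carrier G"
       "\<And>z. z \<in> carrier G \<Longrightarrow> B #> z = B #> x \<Longrightarrow> C #> z = C #> y \<Longrightarrow> False"
  shows "card (rcosets (B \<inter> C)) \<noteq> card (rcosets B) * card (rcosets C)"
proof -
  have "(\<lambda>x. (B #> x, C #> x)) ` carrier G \<subset> (rcosets B) \<times> (rcosets C)"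
  proof
    show "(\<lambda>x. (B #> x, C #> x)) ` carrier G \<noteq> (rcosets B) \<times> (rcosets C)"
    proof
      assume e: "(\<lambda>x. (B #> x, C #> x)) ` carrier G = (rcosets B) \<times> (rcosets C)"
      have "(B #> x, C #> y) \<in> (rcosets B) \<times> (rcosets C)"
        using ns subgroup.subset[OF B] subgroup.subset[OF C] by (auto intro: rcosetsI)
      then have "(B #> x, C #> y) \<in> (\<lambda>x. (B #> x, C #> x)) ` carrier G" using e by simp
      then obtain z where "z \<in> carrier G" "(B #> x, C #> y) = (B #> z, C #> z)" by blast
      then show False using ns(3)[of z] by simp
    qed
  qed (rule image_sub[OF B C])
  then have "card ((\<lambda>x. (B #> x, C #> x)) ` carrier G) < card ((rcosets B) \<times> (rcosets C))"
    using fin by (intro psubset_card_mono) auto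
  then show ?thesis unfolding card_inter_image[OF B C] card_cartesian_product by simp
qed




lemma odd_pow_cong: "odd (a::int) \<Longrightarrow> [a ^ (2^k) = 1] (mod 2^(Suc k))"
proof (induction k)
  case 0
  then show ?case by (simp add: cong_def odd_iff_mod_2_eq_one)
next
  case (Suc k)
  then have "(2::int)^(Suc k) dvd a^(2^k) - 1" by (simp add: cong_iff_dvd_diff)
  moreover have "(2::int) dvd a^(2^k) + 1" using Suc.prems by simp
  ultimately have "(2::int)^(Suc k) * 2 dvd (a^(2^k) - 1) * (a^(2^k) + 1)" by (rule mult_dvd_mono)
  moreover have "(a^(2^k) - 1) * (a^(2^k) + 1) = a^(2^(Suc k)) - 1"
    by (simp add: algebra_simps power_mult[symmetric] power2_eq_square[symmetric] mult.commute)
  ultimately show ?case by (simp add: cong_iff_dvd_diff mult.commute)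
qed

definition vtw :: "nat \<Rightarrow> nat" where "vtw M = multiplicity (2::nat) M"
definition oddp :: "nat \<Rightarrow> nat" where "oddp M = M div 2 ^ vtw M"
definition eid :: "nat \<Rightarrow> int" where "eid M = int (oddp M) ^ (2 ^ vtw M)"

lemma vo1: "M = 2 ^ vtw M * oddp M"
  unfolding oddp_def vtw_def using multiplicity_dvd[of 2 M] by auto
lemma vo2: "0 < M \<Longrightarrow> odd (oddp M)"
  unfolding oddp_def vtw_def using multiplicity_decompose[of M 2] by auto

lemma eid1: "0 < M \<Longrightarrow> [eid M = 1] (mod 2 ^ vtw M)"
proof -
  assume "0 < M"
  then have "odd (int (oddp M))" using vo2 by simp
  from odd_pow_cong[OF this, of "vtw M"] have "[eid M = 1] (mod 2 ^ Suc (vtw M))" by (simp add: eid_def)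
  then show ?thesis by (rule cong_dvd_modulus) (simp add: le_imp_power_dvd)
qed

lemma eid0: "[eid M = 0] (mod int (oddp M))"
  unfolding eid_def cong_0_iff by simp

lemma eid_compat: assumes "0 < M" "N dvd M" shows "[eid M = eid N] (mod int N)"
proof -
  have N0: "0 < N" using assms by (metis dvd_0_left_iff gr0I not_less0)
  have v: "vtw N \<le> vtw M" unfolding vtw_def using assms by (intro dvd_imp_multiplicity_le) auto
  have cpN: "coprime (oddp N) (2 ^ vtw M)" using vo2[OF N0] by simp
  have "oddp N dvd M" using assms(2) vo1[of N] by (metis dvd_mult_right)
  then have "oddp N dvd 2 ^ vtw M * oddp M" using vo1[of M] by simp
  then have o: "oddp N dvd oddp M" using cpN by (simp add: coprime_dvd_mult_right_iff)
  have c1: "[eid M = eid N] (mod 2 ^ vtw N)"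
  proof -
    have "[eid M = 1] (mod 2 ^ vtw N)" using eid1[OF assms(1)] by (rule cong_dvd_modulus) (simp add: le_imp_power_dvd v)
    then show ?thesis using eid1[OF N0] by (meson cong_sym cong_trans)
  qed
  have c2: "[eid M = eid N] (mod int (oddp N))"
  proof -
    have "[eid M = 0] (mod int (oddp N))" using eid0[of M] o by (meson cong_dvd_modulus int_dvd_int_iff)
    then show ?thesis using eid0[of N] by (meson cong_sym cong_trans)
  qed
  have "coprime ((2::int) ^ vtw N) (int (oddp N))" using vo2[OF N0] by simp
  from coprime_cong_mult[OF c1 c2 this] show ?thesis using vo1[of N]
    by (metis of_nat_mult of_nat_numeral of_nat_power)
qed

definition WW :: "m2 \<Rightarrow> int \<Rightarrow> m2" where "WW X e = mat e ** X + mat (1 - e)"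

lemma mcong_WW: "[e = e'] (mod int K) \<Longrightarrow> mcong K (WW X e) (WW X e')"
  unfolding WW_def by (intro mcong_add mcong_mult mcong_mat cong_diff mcong_refl cong_refl)

lemma mcong_int: "[a = b] (mod int K) \<longleftrightarrow> [a = b] (mod int K)" ..

lemma WW1: "[e = 1] (mod int K) \<Longrightarrow> mcong K (WW X e) X"
  using mcong_WW[of e 1 K X] by (simp add: WW_def)

lemma WW0: "[e = 0] (mod int K) \<Longrightarrow> mcong K (WW X e) (mat 1)"
  using mcong_WW[of e 0 K X] by (simp add: WW_def)

definition liftc :: "m2 \<Rightarrow> nat \<Rightarrow> m2" where
  "liftc X = (\<lambda>M. if M = 0 then 0 else red M (WW X (eid M)))"

lemma liftc_GL: assumes "odd (det X)" shows "liftc X \<in> GL2hat_set"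
  unfolding GL2hat_set_def
proof (intro CollectI conjI allI impI)
  show "liftc X \<in> Mhat"
  proof (rule MhatI)
    fix N M :: nat assume NM: "0 < N" "0 < M" "N dvd M"
    have "red N (liftc X M) = red N (WW X (eid M))" using NM by (simp add: liftc_def red_red_dvd)
    also have "\<dots> = red N (WW X (eid N))" unfolding red_eq_iff
      by (rule mcong_WW, rule eid_compat) (use NM in auto)
    finally show "red N (liftc X M) = liftc X N" using NM by (simp add: liftc_def)
  qed (simp add: liftc_def)
next
  fix M :: nat assume M: "0 < M"
  have a: "coprime (det (WW X (eid M))) (2 ^ vtw M)"
  proof -
    have "mcong (2 ^ vtw M) (WW X (eid M)) X" by (rule WW1) (use eid1[OF M] in simp)
    then have "[det (WW X (eid M)) = det X] (mod int (2 ^ vtw M))" by (rule mcong_det)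
    moreover have "coprime (det X) (int (2 ^ vtw M))" using assms by simp
    ultimately show ?thesis using cong_imp_coprime cong_sym by (metis of_nat_numeral of_nat_power)
  qed
  have b: "coprime (det (WW X (eid M))) (int (oddp M))"
  proof -
    have "mcong (oddp M) (WW X (eid M)) (mat 1)" by (rule WW0) (rule eid0)
    then have "[det (WW X (eid M)) = 1] (mod int (oddp M))" using mcong_det by fastforce
    then show ?thesis by (rule coprime_one_cong)
  qed
  have "coprime (det (WW X (eid M))) (int M)"
    using a b vo1[of M] by (metis coprime_mult_right_iff of_nat_mult of_nat_numeral of_nat_power)
  then show "coprime (det (liftc X M)) (int M)"
    using M det_red[of M "WW X (eid M)"] by (simp add: liftc_def) (meson cong_imp_coprime cong_sym)
qed

lemma liftc_2pow: "liftc X (2^n) = red (2^n) X"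
proof -
  have o: "oddp (2^n) = 1"
  proof -
    have "oddp (2^n) dvd 2^n" using vo1[of "2^n"] by (metis dvd_triv_right)
    moreover have "coprime (oddp (2^n)) (2^n)" using vo2[of "2^n"] by simp
    ultimately show ?thesis using coprime_common_divisor[of "oddp (2^n)" "2^n" "oddp (2^n)"] by auto
  qed
  then have "2 ^ n = 2 ^ vtw (2^n)" using vo1[of "2^n"] by simp
  moreover have "[eid (2^n) = 1] (mod 2 ^ vtw (2^n))" using eid1[of "2^n"] by simp
  ultimately have "[eid (2^n) = 1] (mod int (2^n))" by (metis of_nat_numeral of_nat_power)
  then have "red (2^n) (WW X (eid (2^n))) = red (2^n) X" unfolding red_eq_iff by (rule WW1)
  then show ?thesis by (simp add: liftc_def)
qed




lemma mod4_contra: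
  fixes a b t11 t12 t21 t22 :: int
  assumes t21: "odd t21" and tr: "odd (t11 + t22)"
    and e1: "[b*t21*(1+2*t11) + (a + b*t22)*2 = 0] (mod 4)"
    and e2: "[(a + b*t11)*(a+b*t22) - b*t12*(b*t21) = 1] (mod 4)"
  shows False
proof -
  have "[b*t21*(1+2*t11) + (a + b*t22)*2 = 0] (mod 2)"
    using e1 by (rule cong_dvd_modulus) simp
  then have "even (b*t21*(1+2*t11))" by (simp add: cong_0_iff)
  then have "even b" using t21 by simp
  then obtain c where b: "b = 2*c" by blast
  from e1 have "4 dvd 2 * (c*t21*(1+2*t11) + a + 2*c*t22)"
    unfolding b cong_0_iff by (simp add: algebra_simps)
  moreover have h: "\<And>X::int. 4 dvd 2*X \<Longrightarrow> 2 dvd X" by presburger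
  ultimately have "2 dvd c*t21*(1+2*t11) + a + 2*c*t22" by blast
  then have "even (c*t21*(1+2*t11) + a)" by simp
  then have "even (c + a)" using t21 by auto
  then obtain k where a: "a = 2*k - c" by (metis add_diff_cancel_left' dvd_def mult.commute)
  obtain sv where sv: "t11 + t22 = 2 * sv + 1" using tr by (metis oddE)
  have "(a + b*t11)*(a+b*t22) - b*t12*(b*t21) = a*a + 2*a*c*(t11+t22) + 4*c*c*(t11*t22 - t12*t21)"
    unfolding b by (simp add: algebra_simps)
  also have "\<dots> = 4 * (k*k - k*c + k*c*(2 * sv+1) - c * c * sv + c*c*(t11*t22 - t12*t21)) - c*c"
    unfolding a sv by (simp add: algebra_simps)
  finally have "[4 * (k*k - k*c + k*c*(2 * sv+1) - c * c * sv + c*c*(t11*t22 - t12*t21)) - c*c = 1] (mod 4)"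
    using e2 by simp
  then have d: "4 dvd 4 * (k*k - k*c + k*c*(2 * sv+1) - c * c * sv + c*c*(t11*t22 - t12*t21)) - c*c - 1"
    by (simp add: cong_iff_dvd_diff)
  define W where "W = k*k - k*c + k*c*(2 * sv+1) - c * c * sv + c*c*(t11*t22 - t12*t21)"
  have d: "4 dvd 4 * W - c*c - 1" using d unfolding W_def .
  show False
  proof (cases "even c")
    case True
    then obtain m where "c = 2*m" by blast
    then have "c*c = 4*(m*m)" by simp
    then have "4 dvd 4 * (W - m*m) - 1" using d by (simp add: algebra_simps)
    moreover have "\<And>X::int. \<not> 4 dvd 4*X - 1" by presburger
    ultimately show False by blast
  next
    case False
    then obtain m where "c = 2*m+1" by (metis oddE)
    then have "c*c = 4*(m*m+m) + 1" by (simp add: algebra_simps)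
    then have "4 dvd 4 * (W - m*m - m) - 2" using d by (simp add: algebra_simps)
    moreover have "\<And>X::int. \<not> 4 dvd 4*X - 2" by presburger
    ultimately show False by blast
  qed
qed




definition mk :: "int \<Rightarrow> int \<Rightarrow> int \<Rightarrow> int \<Rightarrow> m2" where
  "mk a b c d = (\<chi> i j. if i = 1 then (if j = 1 then a else b) else (if j = 1 then c else d))"

lemma mk_entries[simp]: "mk a b c d $1$1 = a" "mk a b c d $1$2 = b" "mk a b c d $2$1 = c" "mk a b c d $2$2 = d"
  by (simp_all add: mk_def)

lemma fin_range_red: assumes "0 < N" shows "finite (range (red N))"
proof -
  let ?S = "{0..<int N}"
  have "range (red N) \<subseteq> (\<lambda>(a,b,c,d). mk a b c d) ` (?S \<times> ?S \<times> ?S \<times> ?S)"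
  proof
    fix A assume "A \<in> range (red N)"
    then obtain B where A: "A = red N B" by blast
    have "A = mk (A$1$1) (A$1$2) (A$2$1) (A$2$2)" by (simp add: m2_eq_iff)
    moreover have "(A$1$1, A$1$2, A$2$1, A$2$2) \<in> ?S \<times> ?S \<times> ?S \<times> ?S"
      unfolding A using assms by simp
    ultimately show "A \<in> (\<lambda>(a,b,c,d). mk a b c d) ` (?S \<times> ?S \<times> ?S \<times> ?S)"
      by (intro image_eqI[of _ _ "(A$1$1, A$1$2, A$2$1, A$2$2)"]) simp_all
  qed
  then show ?thesis by (rule finite_subset) auto
qed

lemma fin_rcosets:
  assumes grp: "group G" "mult G = hmul" "one G = hone" "carrier G \<subseteq> GL2hat_set"
    and inv: "\<And>x. x \<in> carrier G \<Longrightarrow> inv\<^bsub>G\<^esub> x = ginv x \<and> ginv x \<in> carrier G"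
    and N: "0 < N" and H: "subgroup H G" "H = {g \<in> carrier G. P (g N)}" and P: "P (red N (mat 1))"
  shows "finite (rcosets\<^bsub>G\<^esub> H)"
proof -
  have key: "H #>\<^bsub>G\<^esub> x = H #>\<^bsub>G\<^esub> y" if xy: "x \<in> carrier G" "y \<in> carrier G" "x N = y N" for x y
  proof -
    have "y \<otimes>\<^bsub>G\<^esub> inv\<^bsub>G\<^esub> y = one G" using group.r_inv[OF grp(1) xy(2)] .
    then have yy: "hmul y (ginv y) = hone" using grp inv[OF xy(2)] by simp
    have "hmul x (ginv y) N = red N (x N ** ginv y N)" using N by (simp add: hmul_pos)
    also have "\<dots> = hmul y (ginv y) N" using N xy(3) by (simp add: hmul_pos)
    also have "\<dots> = red N (mat 1)" using yy N by (simp add: hone_pos)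
    finally have e: "hmul x (ginv y) N = red N (mat 1)" .
    have "x \<otimes>\<^bsub>G\<^esub> inv\<^bsub>G\<^esub> y \<in> carrier G"
      using xy grp(1) by (simp add: group.is_monoid monoid.m_closed group.inv_closed)
    then have "x \<otimes>\<^bsub>G\<^esub> inv\<^bsub>G\<^esub> y \<in> H" using e P H(2) grp(2) inv[OF xy(2)] by simp
    then have "x \<in> H #>\<^bsub>G\<^esub> y" using subgroup.rcos_module_rev[OF H(1) grp(1) xy(2) xy(1)] by simp
    then show ?thesis using group.repr_independence[OF grp(1) _ xy(2) H(1)] by simp
  qed
  define rep where "rep A = (SOME x. x \<in> carrier G \<and> x N = A)" for A
  have "rcosets\<^bsub>G\<^esub> H \<subseteq> (\<lambda>A. H #>\<^bsub>G\<^esub> rep A) ` range (red N)"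
  proof
    fix R assume "R \<in> rcosets\<^bsub>G\<^esub> H"
    then obtain x where x: "x \<in> carrier G" "R = H #>\<^bsub>G\<^esub> x" unfolding RCOSETS_def by blast
    have xm: "x \<in> Mhat" using x grp(4) unfolding GL2hat_set_def by auto
    have r: "rep (x N) \<in> carrier G \<and> rep (x N) N = x N"
      unfolding rep_def by (rule someI[of _ x]) (use x in simp)
    have "R = H #>\<^bsub>G\<^esub> rep (x N)" using key[OF x(1)] r x(2) by simp
    moreover have "x N \<in> range (red N)" using mhat_red[OF xm N] by (metis rangeI)
    ultimately show "R \<in> (\<lambda>A. H #>\<^bsub>G\<^esub> rep A) ` range (red N)" by blast
  qed
  then show ?thesis by (rule finite_subset) (intro finite_imageI fin_range_red N)
qed




lemma inert_odd: fixes T :: m2 assumes "inert_at 2 T" "\<not> (even a \<and> even b)" shows "odd (det (mat a + mat b ** T))"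
  using assms unfolding inert_at_def by auto

lemma det_cns: fixes T :: m2 shows "det (mat a + mat b ** T) = (a + b*T$1$1)*(a + b*T$2$2) - (b*T$1$2)*(b*T$2$1)"
  by (simp add: det_2 mm)

lemma T_facts: fixes T :: m2 assumes "inert_at 2 T" shows "odd (det T)" "odd (T$1$1 + T$2$2)" "odd (T$2$1)"
proof -
  have d: "odd (det T)" using inert_odd[OF assms, of 0 1] by (simp add: det_cns det_2)
  have "odd (det (mat 1 + mat 1 ** T))" using inert_odd[OF assms, of 1 1] by simp
  then have "odd (1 + (T$1$1 + T$2$2) + det T)" unfolding det_cns det_2 by (simp add: algebra_simps)
  then show t: "odd (T$1$1 + T$2$2)" using d by simp
  show "odd (det T)" by (rule d)
  show "odd (T$2$1)"
  proof
    assume "even (T$2$1)"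
    then have "odd (T$1$1 * T$2$2)" using d unfolding det_2 by auto
    then show False using t by simp
  qed
qed

lemma odd_det_col: "odd ((a::int)*d - b*c) \<Longrightarrow> odd a \<or> odd c" by auto

definition cst :: "m2 \<Rightarrow> nat \<Rightarrow> m2" where
  "cst Y = (\<lambda>M. if M = 0 then 0 else red M Y)"

lemma cst_SL: assumes "det Y = 1" shows "cst Y \<in> SL2hat_set"
proof -
  have m: "cst Y \<in> Mhat" by (rule MhatI) (auto simp: cst_def red_red_dvd)
  have c: "[det (cst Y M) = 1] (mod int M)" if "0 < M" for M
    using det_red[of M Y] that assms by (simp add: cst_def)
  show ?thesis unfolding SL2hat_set_def GL2hat_set_def using m c coprime_one_cong by auto
qed

theorem mainTheorem2:
  fixes n :: nat and T :: "int^2^2"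
  assumes "n \<ge> 1"
    and "imag_quad_optimal T"
    and "\<forall>p. prime p \<and> p dvd int (2^n) \<longrightarrow> inert_at p T"
  shows "subgroup_index GL2hat (B0 (2^n) \<inter> Cns (2^n) T)
           = subgroup_index GL2hat (B0 (2^n)) * subgroup_index GL2hat (Cns (2^n) T)
         \<and> (n > 1 \<longrightarrow>
            subgroup_index SL2hat (B0 (2^n) \<inter> Cns (2^n) T \<inter> SL2hat_set)
              \<noteq> subgroup_index SL2hat (B0 (2^n) \<inter> SL2hat_set)
                 * subgroup_index SL2hat (Cns (2^n) T \<inter> SL2hat_set))"
proof -
  define N where "N = (2::nat)^n"
  have N0: "0 < N" unfolding N_def by simp
  have "(2::int) dvd int (2^n)" using assms(1) by (simp add: dvd_power)
  then have inert: "inert_at 2 T" using assms(3) by auto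
  note tf = T_facts[OF inert]
  have cpN: "coprime x (int N) \<longleftrightarrow> odd x" for x :: int
    using assms(1) unfolding N_def by simp
  have GLinv: "\<And>x. x \<in> carrier GL2hat \<Longrightarrow> inv\<^bsub>GL2hat\<^esub> x = ginv x \<and> ginv x \<in> carrier GL2hat"
    using inv_GL ginv_GL by simp
  have Beq: "B0 N = {g \<in> carrier GL2hat. g N $ 2 $ 1 = 0}" by (simp add: B0_def)
  have Ceq: "Cns N T = {g \<in> carrier GL2hat. \<exists>a b::int.
      coprime (det (mat a + mat b ** T)) (int N) \<and> g N = red N (mat a + mat b ** T)}" by (simp add: Cns_def)
  have Bsub: "subgroup (B0 N) GL2hat" unfolding Beq
    by (rule B0_sub[OF N0 group_GL _ _ _ GLinv]) simp_all
  have Csub: "subgroup (Cns N T) GL2hat" unfolding Ceq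
    by (rule Cns_sub[OF N0 group_GL _ _ _ GLinv]) simp_all
  interpret GL: group GL2hat by (rule group_GL)
  have part1: "card (rcosets\<^bsub>GL2hat\<^esub> (B0 N \<inter> Cns N T))
      = card (rcosets\<^bsub>GL2hat\<^esub> (B0 N)) * card (rcosets\<^bsub>GL2hat\<^esub> (Cns N T))"
  proof (rule GL.independent[OF Bsub Csub])
    fix x y assume x: "x \<in> carrier GL2hat" and y: "y \<in> carrier GL2hat"
    define g where "g = y \<otimes>\<^bsub>GL2hat\<^esub> inv\<^bsub>GL2hat\<^esub> x"
    have ix: "inv\<^bsub>GL2hat\<^esub> x \<in> carrier GL2hat" by (rule group.inv_closed[OF group_GL x])
    have iy: "inv\<^bsub>GL2hat\<^esub> y \<in> carrier GL2hat" by (rule group.inv_closed[OF group_GL y])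
    have gc: "g \<in> carrier GL2hat" unfolding g_def
      by (rule monoid.m_closed[OF group.is_monoid[OF group_GL] y ix])
    define p where "p = g N $ 1 $ 1"
    define q where "q = g N $ 2 $ 1"
    have "coprime (det (g N)) (int N)" using gc N0 unfolding GL_carrier GL2hat_set_def by blast
    then have "odd (det (g N))" using cpN by blast
    then have pq: "odd p \<or> odd q" unfolding p_def q_def det_2 by (rule odd_det_col)
    define a where "a = - T$2$1 * p - q * T$2$2"
    define b where "b = q"
    define X where "X = mat a + mat b ** T"
    have "\<not> (even a \<and> even b)" using pq tf(3) unfolding a_def b_def by auto
    then have oX: "odd (det X)" unfolding X_def by (rule inert_odd[OF inert])
    then have cX: "coprime (det X) (int N)" using cpN by blast
    define c where "c = liftc X"
    have cG: "c \<in> GL2hat_set" unfolding c_def by (rule liftc_GL[OF oX])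
    then have cG': "c \<in> carrier GL2hat" by simp
    have cN: "c N = red N X" unfolding c_def N_def by (rule liftc_2pow)
    have cC: "c \<in> Cns N T" unfolding Cns_def using cG cN cX unfolding X_def by blast
    have "(X ** g N) $ 2 $ 1 = b * T$2$1 * p + (a + b * T$2$2) * q"
      unfolding X_def p_def q_def by (simp add: mm)
    also have "\<dots> = 0" unfolding a_def b_def by (simp add: algebra_simps)
    finally have x0: "(X ** g N) $ 2 $ 1 = 0" .
    have "(c \<otimes>\<^bsub>GL2hat\<^esub> g) N = red N (X ** g N)" using N0 by (simp add: hmul_pos cN red_mult_l)
    then have "(c \<otimes>\<^bsub>GL2hat\<^esub> g) N $ 2 $ 1 = 0" using x0 by simp
    moreover have "c \<otimes>\<^bsub>GL2hat\<^esub> g \<in> carrier GL2hat"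
      by (rule monoid.m_closed[OF group.is_monoid[OF group_GL] cG' gc])
    ultimately have cgB: "c \<otimes>\<^bsub>GL2hat\<^esub> g \<in> B0 N" unfolding Beq by blast
    define z where "z = c \<otimes>\<^bsub>GL2hat\<^esub> y"
    have zc: "z \<in> carrier GL2hat" unfolding z_def
      by (rule monoid.m_closed[OF group.is_monoid[OF group_GL] cG' y])
    have eqx: "z \<otimes>\<^bsub>GL2hat\<^esub> inv\<^bsub>GL2hat\<^esub> x = c \<otimes>\<^bsub>GL2hat\<^esub> g"
      unfolding z_def g_def by (rule GL.m_assoc[OF cG' y ix])
    have "z \<in> B0 N #>\<^bsub>GL2hat\<^esub> x"
      by (rule subgroup.rcos_module_rev[OF Bsub group_GL x zc cgB[folded eqx]])
    then have e1: "B0 N #>\<^bsub>GL2hat\<^esub> z = B0 N #>\<^bsub>GL2hat\<^esub> x"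
      using GL.repr_independence[OF _ x Bsub] by metis
    have "z \<otimes>\<^bsub>GL2hat\<^esub> inv\<^bsub>GL2hat\<^esub> y = c \<otimes>\<^bsub>GL2hat\<^esub> (y \<otimes>\<^bsub>GL2hat\<^esub> inv\<^bsub>GL2hat\<^esub> y)"
      unfolding z_def by (rule GL.m_assoc[OF cG' y iy])
    also have "\<dots> = c" using GL.r_inv[OF y] GL.r_one[OF cG'] by metis
    finally have eqy: "z \<otimes>\<^bsub>GL2hat\<^esub> inv\<^bsub>GL2hat\<^esub> y = c" .
    have "z \<in> Cns N T #>\<^bsub>GL2hat\<^esub> y"
      by (rule subgroup.rcos_module_rev[OF Csub group_GL y zc cC[folded eqy]])
    then have e2: "Cns N T #>\<^bsub>GL2hat\<^esub> z = Cns N T #>\<^bsub>GL2hat\<^esub> y"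
      using GL.repr_independence[OF _ y Csub] by metis
    show "\<exists>z\<in>carrier GL2hat. B0 N #>\<^bsub>GL2hat\<^esub> z = B0 N #>\<^bsub>GL2hat\<^esub> x \<and>
        Cns N T #>\<^bsub>GL2hat\<^esub> z = Cns N T #>\<^bsub>GL2hat\<^esub> y"
      using zc e1 e2 by blast
  qed
  have part2: "card (rcosets\<^bsub>SL2hat\<^esub> (B0 N \<inter> Cns N T \<inter> SL2hat_set))
      \<noteq> card (rcosets\<^bsub>SL2hat\<^esub> (B0 N \<inter> SL2hat_set)) * card (rcosets\<^bsub>SL2hat\<^esub> (Cns N T \<inter> SL2hat_set))"
    if n1: "n > 1"
  proof -
    interpret SL: group SL2hat by (rule group_SL)
    have SLinv: "\<And>x. x \<in> carrier SL2hat \<Longrightarrow> inv\<^bsub>SL2hat\<^esub> x = ginv x \<and> ginv x \<in> carrier SL2hat"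
      using inv_SL ginv_SL by simp
    have SLc: "carrier SL2hat \<subseteq> GL2hat_set" using SL_sub_GL by simp
    have Beq': "B0 N \<inter> SL2hat_set = {g \<in> carrier SL2hat. g N $ 2 $ 1 = 0}"
      using SL_sub_GL by (auto simp: B0_def)
    have Ceq': "Cns N T \<inter> SL2hat_set = {g \<in> carrier SL2hat. \<exists>a b::int.
      coprime (det (mat a + mat b ** T)) (int N) \<and> g N = red N (mat a + mat b ** T)}"
      using SL_sub_GL by (auto simp: Cns_def)
    have Bsub': "subgroup (B0 N \<inter> SL2hat_set) SL2hat" unfolding Beq'
      by (rule B0_sub[OF N0 group_SL _ SLc _ SLinv]) simp_all
    have Csub': "subgroup (Cns N T \<inter> SL2hat_set) SL2hat" unfolding Ceq'
      by (rule Cns_sub[OF N0 group_SL _ SLc _ SLinv]) simp_all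
    have finB: "finite (rcosets\<^bsub>SL2hat\<^esub> (B0 N \<inter> SL2hat_set))"
    proof (rule fin_rcosets[OF group_SL _ _ SLc SLinv N0 Bsub' Beq'])
      show "red N (mat 1) $ 2 $ 1 = 0" by simp
    qed simp_all
    have finC: "finite (rcosets\<^bsub>SL2hat\<^esub> (Cns N T \<inter> SL2hat_set))"
    proof (rule fin_rcosets[OF group_SL _ _ SLc SLinv N0 Csub' Ceq'])
      show "\<exists>a b::int. coprime (det (mat a + mat b ** T)) (int N) \<and> red N (mat 1) = red N (mat a + mat b ** T)"
        by (intro exI[of _ 1] exI[of _ 0]) simp
    qed simp_all
    have ieq: "B0 N \<inter> Cns N T \<inter> SL2hat_set = (B0 N \<inter> SL2hat_set) \<inter> (Cns N T \<inter> SL2hat_set)" by blast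
    define Y where "Y = mk (1 + 2 * T$1$1) (T$1$1) 2 1"
    have dY: "det Y = 1" unfolding Y_def det_2 by simp
    define y0 where "y0 = cst Y"
    have y0: "y0 \<in> carrier SL2hat" unfolding y0_def using cst_SL[OF dY] by simp
    have one: "\<one>\<^bsub>SL2hat\<^esub> \<in> carrier SL2hat" by (rule SL.one_closed)
    obtain k where k: "n = k + 2" using n1 by (intro that[of "n - 2"]) simp
    have 4: "(4::int) dvd int N" unfolding N_def k by (simp add: power_add)
    show ?thesis unfolding ieq
    proof (rule SL.not_independent[OF Bsub' Csub' finB finC one y0])
      fix z assume zc: "z \<in> carrier SL2hat"
        and eB: "(B0 N \<inter> SL2hat_set) #>\<^bsub>SL2hat\<^esub> z = (B0 N \<inter> SL2hat_set) #>\<^bsub>SL2hat\<^esub> \<one>\<^bsub>SL2hat\<^esub>"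
        and eC: "(Cns N T \<inter> SL2hat_set) #>\<^bsub>SL2hat\<^esub> z = (Cns N T \<inter> SL2hat_set) #>\<^bsub>SL2hat\<^esub> y0"
      have "z \<in> (B0 N \<inter> SL2hat_set) #>\<^bsub>SL2hat\<^esub> z" by (rule SL.rcos_self[OF zc Bsub'])
      then have "z \<in> (B0 N \<inter> SL2hat_set) #>\<^bsub>SL2hat\<^esub> \<one>\<^bsub>SL2hat\<^esub>" unfolding eB .
      then have zB: "z \<in> B0 N \<inter> SL2hat_set"
        unfolding SL.coset_mult_one[OF subgroup.subset[OF Bsub']] .
      have "z \<in> (Cns N T \<inter> SL2hat_set) #>\<^bsub>SL2hat\<^esub> z" by (rule SL.rcos_self[OF zc Csub'])
      then have "z \<in> (Cns N T \<inter> SL2hat_set) #>\<^bsub>SL2hat\<^esub> y0" unfolding eC .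
      then have cC: "z \<otimes>\<^bsub>SL2hat\<^esub> inv\<^bsub>SL2hat\<^esub> y0 \<in> Cns N T \<inter> SL2hat_set"
        by (rule subgroup.rcos_module_imp[OF Csub' group_SL y0])
      define c where "c = z \<otimes>\<^bsub>SL2hat\<^esub> inv\<^bsub>SL2hat\<^esub> y0"
      have iy0: "inv\<^bsub>SL2hat\<^esub> y0 \<in> carrier SL2hat" by (rule SL.inv_closed[OF y0])
      have "c \<otimes>\<^bsub>SL2hat\<^esub> y0 = z \<otimes>\<^bsub>SL2hat\<^esub> (inv\<^bsub>SL2hat\<^esub> y0 \<otimes>\<^bsub>SL2hat\<^esub> y0)"
        unfolding c_def by (rule SL.m_assoc[OF zc iy0 y0])
      also have "\<dots> = z" using SL.l_inv[OF y0] SL.r_one[OF zc] by metis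
      finally have zcy: "z = hmul c y0" by simp
      from cC[folded c_def] obtain a b where ab: "coprime (det (mat a + mat b ** T)) (int N)"
          "c N = red N (mat a + mat b ** T)" and cS: "c \<in> SL2hat_set"
        unfolding Cns_def by blast
      define X where "X = mat a + mat b ** T"
      have "z N $ 2 $ 1 = 0" using zB by (simp add: B0_def)
      then have h0: "hmul c y0 N $ 2 $ 1 = 0" using zcy by simp
      have "hmul c y0 N = red N (red N X ** red N Y)" using N0 ab(2)
        by (simp add: hmul_pos y0_def cst_def X_def)
      also have "\<dots> = red N (X ** Y)" by (simp only: red_mult_l red_mult_r)
      finally have "red N (X ** Y) $ 2 $ 1 = 0" using h0 by simp
      then have "[(X ** Y) $ 2 $ 1 = 0] (mod int N)" by (simp add: cong_def)
      then have c1: "[(X ** Y) $ 2 $ 1 = 0] (mod 4)" using 4 by (rule cong_dvd_modulus)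
      have "[det (c N) = 1] (mod int N)" using cS N0 unfolding SL2hat_set_def by auto
      then have "[det X = 1] (mod int N)" using det_red[of N X] ab(2) unfolding X_def
        by (metis cong_sym cong_trans)
      then have c2: "[det X = 1] (mod 4)" using 4 by (rule cong_dvd_modulus)
      have "(X ** Y) $ 2 $ 1 = b*T$2$1*(1+2*T$1$1) + (a + b*T$2$2)*2"
        unfolding X_def Y_def by (simp add: mm)
      moreover have "det X = (a + b*T$1$1)*(a+b*T$2$2) - b*T$1$2*(b*T$2$1)"
        unfolding X_def det_cns by simp
      ultimately show False using mod4_contra[OF tf(3) tf(2)] c1 c2 by simp
    qed
  qed
  show ?thesis using part1 part2 unfolding subgroup_index_def N_def by simp
qed


end
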